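(* Let $\mathcal X$ be a Polish space with Borel $\sigma$-algebra and a $\sigma$-finite reference measure $\mathrm{d}x$, and let $\pi,\pi_Y$ be probability measures on $\mathcal X$ with densities (also denoted $\pi,\pi_Y$) such that $w=\pi/\pi_Y$ satisfies $|w|_\infty=\sup_{x}|w(x)|<\infty$. Let $\{Y_n\}_{n\ge 0}$ be any $\mathcal X$-valued stochastic process with $Y_0=y_0$, and for $n\ge1$ let $\hat\pi_{Y,n}=\frac1n\sum_{i=1}^n\delta_{Y_i}$ and \[ \hat\theta_n(\cdot)=\sum_{i=1}^n\frac{w(Y_i)}{\sum_{j=1}^n w(Y_j)}\delta_{Y_i}(\cdot),\qquad \eta_n(\cdot)=\mathbb E\,\hat\theta_n(\cdot). \] Then for all $n\ge1$, \[ \|\eta_n-\pi\|_{TV}\le B_n:=|w|_\infty\sup_{|f|\le1}\mathbb E\,\hat\pi_{Y,n}(\bar f)+2|w|_\infty^2\sup_{|f|\le1}\mathbb E\big(\hat\pi_{Y,n}(\bar f)\big)^2 . \]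
   Context: For a measurable $f:\mathcal X\to\mathbb R$, $\hat\pi_{Y,n}(\bar f):=\hat\pi_{Y,n}(f)-\pi_Y(f)$; suprema are over measurable $f$ with $|f|\le 1$. The total variation distance is $\|\mu-\nu\|_{TV}=\frac12\sup_{|f|\le1}|\mu(f)-\nu(f)|$. In the algorithm, $\eta_n$ is the conditional law of $X_{n+1}$ given that the resampling step is used at time $n+1$. *)

theory Defs
  imports "HOL-Probability.Probability"
begin

definition theta_hat :: "('a \<Rightarrow> real) \<Rightarrow> (nat \<Rightarrow> 'b \<Rightarrow> 'a) \<Rightarrow> nat \<Rightarrow> 'b \<Rightarrow> 'a set \<Rightarrow> real" where
  "theta_hat w Y n \<omega> A =
     (\<Sum>i=1..n. (w (Y i \<omega>) / (\<Sum>j=1..n. w (Y j \<omega>))) * indicator A (Y i \<omega>))"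

definition eta :: "'b measure \<Rightarrow> ('a::topological_space \<Rightarrow> real) \<Rightarrow> (nat \<Rightarrow> 'b \<Rightarrow> 'a) \<Rightarrow> nat \<Rightarrow> 'a measure" where
  "eta P w Y n = measure_of UNIV (sets borel) (\<lambda>A. \<integral>\<^sup>+\<omega>. ennreal (theta_hat w Y n \<omega> A) \<partial>P)"

text \<open>hat pi_{Y,n}(bar f) = hat pi_{Y,n}(f) - pi_Y(f).\<close>
definition emp_dev :: "'a measure \<Rightarrow> (nat \<Rightarrow> 'b \<Rightarrow> 'a) \<Rightarrow> nat \<Rightarrow> 'b \<Rightarrow> ('a \<Rightarrow> real) \<Rightarrow> real" where
  "emp_dev piY Y n \<omega> f = (1 / real n) * (\<Sum>i=1..n. f (Y i \<omega>)) - (\<integral>x. f x \<partial>piY)"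

definition unit_fns :: "'a measure \<Rightarrow> ('a \<Rightarrow> real) set" where
  "unit_fns M = {f \<in> borel_measurable M. \<forall>x\<in>space M. \<bar>f x\<bar> \<le> 1}"

definition tv_dist :: "'a measure \<Rightarrow> 'a measure \<Rightarrow> real" where
  "tv_dist M N = (1/2) * (SUP f \<in> unit_fns M. \<bar>(\<integral>x. f x \<partial>M) - (\<integral>x. f x \<partial>N)\<bar>)"

end

theory Submission
  imports Defs
begin


definition Kk :: "('a::topological_space \<Rightarrow> real) \<Rightarrow> (nat \<Rightarrow> 'b \<Rightarrow> 'a) \<Rightarrow> nat \<Rightarrow> 'b \<Rightarrow> 'a measure" where
  "Kk w Y n \<omega> = distr (density (count_space {1..n}) (\<lambda>i. ennreal (w (Y i \<omega>) / (\<Sum>j=1..n. w (Y j \<omega>))))) borel (\<lambda>i. Y i \<omega>)"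

lemma sets_Kk[simp]: "sets (Kk w Y n \<omega>) = sets borel" by (simp add: Kk_def)
lemma space_Kk[simp]: "space (Kk w Y n \<omega>) = UNIV" by (simp add: Kk_def)

lemma nn_integral_Kk:
  fixes w :: "'a::topological_space \<Rightarrow> real"
  assumes "\<And>x. w x \<ge> 0" "g \<in> borel_measurable borel"
  shows "(\<integral>\<^sup>+x. g x \<partial>Kk w Y n \<omega>) = (\<Sum>i=1..n. ennreal (w (Y i \<omega>) / (\<Sum>j=1..n. w (Y j \<omega>))) * g (Y i \<omega>))"
  unfolding Kk_def using assms
  by (subst nn_integral_distr) (auto simp: nn_integral_density nn_integral_count_space_finite)

lemma coef_sum_le1:
  fixes w :: "'a \<Rightarrow> real"
  assumes "\<And>x. w x \<ge> 0"
  shows "(\<Sum>i=1..n. w (Y i \<omega>) / (\<Sum>j=1..n. w (Y j \<omega>))) \<le> 1"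
proof -
  have "(\<Sum>i=1..n. w (Y i \<omega>) / (\<Sum>j=1..n. w (Y j \<omega>))) = (\<Sum>i=1..n. w (Y i \<omega>)) / (\<Sum>j=1..n. w (Y j \<omega>))"
    by (rule sum_divide_distrib[symmetric])
  moreover have "(\<Sum>i=1..n. w (Y i \<omega>)) / (\<Sum>j=1..n. w (Y j \<omega>)) \<le> 1"
    by (cases "(\<Sum>j=1..n. w (Y j \<omega>)) = 0") auto
  ultimately show ?thesis by simp
qed

lemma coef_nonneg: fixes w :: "'a \<Rightarrow> real" shows "(\<And>x. w x \<ge> 0) \<Longrightarrow> w (Y i \<omega>) / (\<Sum>j=1..n. w (Y j \<omega>)) \<ge> 0"
  by (simp add: sum_nonneg)

lemma emeasure_Kk:
  fixes w :: "'a::topological_space \<Rightarrow> real"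
  assumes "\<And>x. w x \<ge> 0" "A \<in> sets borel"
  shows "emeasure (Kk w Y n \<omega>) A = ennreal (theta_hat w Y n \<omega> A)"
proof -
  have "emeasure (Kk w Y n \<omega>) A = (\<integral>\<^sup>+x. indicator A x \<partial>Kk w Y n \<omega>)"
    using assms by simp
  also have "\<dots> = (\<Sum>i=1..n. ennreal (w (Y i \<omega>) / (\<Sum>j=1..n. w (Y j \<omega>))) * indicator A (Y i \<omega>))"
    using assms by (subst nn_integral_Kk) auto
  also have "\<dots> = ennreal (theta_hat w Y n \<omega> A)"
  proof -
    have cn: "\<And>i. 0 \<le> w (Y i \<omega>) / (\<Sum>j=1..n. w (Y j \<omega>))" by (intro divide_nonneg_nonneg sum_nonneg assms(1))
    have "\<And>i. ennreal (w (Y i \<omega>) / (\<Sum>j=1..n. w (Y j \<omega>))) * indicator A (Y i \<omega>)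
       = ennreal (w (Y i \<omega>) / (\<Sum>j=1..n. w (Y j \<omega>)) * indicator A (Y i \<omega>))"
      by (auto simp: indicator_def)
    then have "(\<Sum>i=1..n. ennreal (w (Y i \<omega>) / (\<Sum>j=1..n. w (Y j \<omega>))) * indicator A (Y i \<omega>))
      = (\<Sum>i=1..n. ennreal (w (Y i \<omega>) / (\<Sum>j=1..n. w (Y j \<omega>)) * indicator A (Y i \<omega>)))" by simp
    also have "\<dots> = ennreal (theta_hat w Y n \<omega> A)"
      unfolding theta_hat_def using cn by (subst sum_ennreal) (auto intro!: mult_nonneg_nonneg simp del: times_divide_eq_left)
    finally show ?thesis .
  qed
  finally show ?thesis .
qed

lemma subprob_Kk: fixes w :: "'a::topological_space \<Rightarrow> real" assumes w: "\<And>x. w x \<ge> 0" shows "subprob_space (Kk w Y n \<omega>)"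
proof (rule subprob_spaceI)
  have "emeasure (Kk w Y n \<omega>) (space (Kk w Y n \<omega>)) = ennreal (theta_hat w Y n \<omega> UNIV)"
    using emeasure_Kk[where w=w and A=UNIV and Y=Y and n=n and \<omega>=\<omega>] w by simp
  also have "\<dots> \<le> 1" unfolding theta_hat_def using coef_sum_le1[where w=w and Y=Y and n=n and \<omega>=\<omega>] w by simp
  finally show "emeasure (Kk w Y n \<omega>) (space (Kk w Y n \<omega>)) \<le> 1" .
qed simp

lemma theta_meas:
  fixes w :: "'a::topological_space \<Rightarrow> real"
  assumes "\<And>i. Y i \<in> measurable P borel" "w \<in> borel_measurable borel" "A \<in> sets borel"
  shows "(\<lambda>\<omega>. theta_hat w Y n \<omega> A) \<in> borel_measurable P"
  unfolding theta_hat_def using assms by measurable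

lemma Kk_meas:
  fixes w :: "'a::topological_space \<Rightarrow> real"
  assumes "\<And>i. Y i \<in> measurable P borel" "w \<in> borel_measurable borel" "\<And>x. w x \<ge> 0"
  shows "Kk w Y n \<in> measurable P (subprob_algebra borel)"
  apply (rule measurable_subprob_algebra)
  using assms by (auto simp: subprob_Kk emeasure_Kk[where w=w] intro!: measurable_compose[OF theta_meas measurable_ennreal])

lemma eta_bind:
  fixes w :: "'a::topological_space \<Rightarrow> real"
  assumes "prob_space P" "\<And>i. Y i \<in> measurable P borel" "w \<in> borel_measurable borel" "\<And>x. w x \<ge> 0"
  shows "eta P w Y n = bind P (Kk w Y n)"
proof -
  have ne: "space P \<noteq> {}" using assms(1) prob_space.not_empty by blast
  have km: "Kk w Y n \<in> measurable P (subprob_algebra borel)" using Kk_meas assms by blast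
  have sb: "sets (bind P (Kk w Y n)) = sets borel" using ne by (simp)
  have sp: "space (bind P (Kk w Y n)) = UNIV" using ne by simp
  have "eta P w Y n = measure_of UNIV (sets borel) (emeasure (bind P (Kk w Y n)))"
    unfolding eta_def
  proof (rule measure_of_eq)
    fix a :: "'a set" assume "a \<in> sigma_sets UNIV (sets borel)"
    then have a: "a \<in> sets borel"
      by (metis sets.sigma_sets_eq space_borel)
    show "(\<integral>\<^sup>+ \<omega>. ennreal (theta_hat w Y n \<omega> a) \<partial>P) = emeasure (bind P (Kk w Y n)) a"
      using emeasure_bind[OF ne km a] emeasure_Kk[where w=w and A=a and Y=Y and n=n] assms(4) a by simp
  qed simp
  also have "\<dots> = bind P (Kk w Y n)"
    using measure_of_of_measure[of "bind P (Kk w Y n)"] sb sp by simp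
  finally show ?thesis .
qed

lemma integral_Kk:
  fixes w :: "'a::topological_space \<Rightarrow> real"
  assumes "\<And>x. w x \<ge> 0" "f \<in> borel_measurable borel"
  shows "integral\<^sup>L (Kk w Y n \<omega>) f = (\<Sum>i=1..n. (w (Y i \<omega>) / (\<Sum>j=1..n. w (Y j \<omega>))) * f (Y i \<omega>))"
proof -
  have "integral\<^sup>L (Kk w Y n \<omega>) f = (\<integral>i. f (Y i \<omega>) \<partial>density (count_space {1..n}) (\<lambda>i. ennreal (w (Y i \<omega>) / (\<Sum>j=1..n. w (Y j \<omega>)))))"
    unfolding Kk_def using assms by (subst integral_distr) auto
  also have "\<dots> = (\<integral>i. (w (Y i \<omega>) / (\<Sum>j=1..n. w (Y j \<omega>))) *\<^sub>R f (Y i \<omega>) \<partial>count_space {1..n})"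
    by (intro integral_density) (auto intro!: AE_I2 divide_nonneg_nonneg sum_nonneg assms(1))
  also have "\<dots> = (\<Sum>i=1..n. (w (Y i \<omega>) / (\<Sum>j=1..n. w (Y j \<omega>))) * f (Y i \<omega>))"
    by (simp add: lebesgue_integral_count_space_finite sum_divide_distrib)
  finally show ?thesis .
qed

lemma eta_integral:
  fixes f :: "'a::topological_space \<Rightarrow> real"
  assumes "prob_space P" "\<And>i. Y i \<in> measurable P borel" "w \<in> borel_measurable borel" "\<And>x. w x \<ge> 0"
    "f \<in> borel_measurable borel" "\<And>x. \<bar>f x\<bar> \<le> 1"
  shows "integral\<^sup>L (eta P w Y n) f = (\<integral>\<omega>. (\<Sum>i=1..n. (w (Y i \<omega>) / (\<Sum>j=1..n. w (Y j \<omega>))) * f (Y i \<omega>)) \<partial>P)"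
proof -
  have km: "Kk w Y n \<in> measurable P (subprob_algebra borel)" using Kk_meas assms by blast
  have "integral\<^sup>L (eta P w Y n) f = \<integral>\<omega>. integral\<^sup>L (Kk w Y n \<omega>) f \<partial>P"
    unfolding eta_bind[OF assms(1-4)]
    apply (rule integral_bind[where B=1 and B'=1 and K=borel])
    using assms km by (auto simp: prob_space_imp_subprob_space subprob_space.subprob_emeasure_le_1 subprob_Kk
       prob_space.finite_measure)
  then show ?thesis using integral_Kk[where w=w and f=f and Y=Y and n=n] assms(4,5) by simp
qed



lemma intg_bdd:
  fixes f :: "'a \<Rightarrow> real"
  assumes "prob_space M" "f \<in> borel_measurable M" "\<And>x. x \<in> space M \<Longrightarrow> \<bar>f x\<bar> \<le> B"
  shows "integrable M f"
proof -
  interpret prob_space M by fact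
  show ?thesis using assms by (intro integrable_const_bound[where B=B]) auto
qed

lemma intg_bdd':
  fixes f :: "'a \<Rightarrow> real"
  assumes "prob_space M" "f \<in> borel_measurable M" "\<And>x. \<bar>f x\<bar> \<le> B"
  shows "integrable M f"
  using intg_bdd[OF assms(1,2), of B] assms(3) by blast

lemma int_abs_le:
  fixes f :: "'a \<Rightarrow> real"
  assumes "prob_space M" "f \<in> borel_measurable M" "\<And>x. x \<in> space M \<Longrightarrow> \<bar>f x\<bar> \<le> B"
  shows "\<bar>integral\<^sup>L M f\<bar> \<le> B"
proof -
  interpret prob_space M by fact
  have "\<bar>integral\<^sup>L M f\<bar> \<le> (\<integral>x. B \<partial>M)"
  proof -
    obtain x where "x \<in> space M" using not_empty by blast
    then have B0: "0 \<le> B" using assms(3)[of x] by linarith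
    have "\<bar>integral\<^sup>L M f\<bar> \<le> (\<integral>x. \<bar>f x\<bar> \<partial>M)" using integral_norm_bound[of M f] by simp
    also have "\<dots> \<le> (\<integral>x. B \<partial>M)"
      using assms B0 by (intro integral_mono intg_bdd[where B=B]) auto
    finally show ?thesis .
  qed
  then show ?thesis by (simp add: prob_space)
qed

lemma avg_bound:
  fixes f :: "'a \<Rightarrow> real"
  assumes "\<And>x. \<bar>f x\<bar> \<le> 1" "n \<ge> 1"
  shows "\<bar>(1 / real n) * (\<Sum>i=1..n. f (Y i \<omega>))\<bar> \<le> 1"
proof -
  have "\<bar>\<Sum>i=1..n. f (Y i \<omega>)\<bar> \<le> (\<Sum>i=1..n. \<bar>f (Y i \<omega>)\<bar>)" by (rule sum_abs)
  also have "\<dots> \<le> (\<Sum>i=1..n. 1)" using assms by (intro sum_mono) auto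
  finally have "\<bar>\<Sum>i=1..n. f (Y i \<omega>)\<bar> \<le> real n" by simp
  then show ?thesis using assms by (simp add: abs_mult field_simps)
qed

lemma theta_bound:
  fixes f w :: "'a \<Rightarrow> real"
  assumes "\<And>x. \<bar>f x\<bar> \<le> 1" "\<And>x. w x \<ge> 0"
  shows "\<bar>\<Sum>i=1..n. (w (Y i \<omega>) / (\<Sum>j=1..n. w (Y j \<omega>))) * f (Y i \<omega>)\<bar> \<le> 1"
proof -
  have "\<bar>\<Sum>i=1..n. (w (Y i \<omega>) / (\<Sum>j=1..n. w (Y j \<omega>))) * f (Y i \<omega>)\<bar>
     \<le> (\<Sum>i=1..n. \<bar>(w (Y i \<omega>) / (\<Sum>j=1..n. w (Y j \<omega>))) * f (Y i \<omega>)\<bar>)" by (rule sum_abs)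
  also have "\<dots> \<le> (\<Sum>i=1..n. (w (Y i \<omega>) / (\<Sum>j=1..n. w (Y j \<omega>))))"
  proof (intro sum_mono)
    fix i
    have c: "0 \<le> w (Y i \<omega>) / (\<Sum>j=1..n. w (Y j \<omega>))" by (intro divide_nonneg_nonneg sum_nonneg assms(2))
    have "\<bar>(w (Y i \<omega>) / (\<Sum>j=1..n. w (Y j \<omega>))) * f (Y i \<omega>)\<bar> = (w (Y i \<omega>) / (\<Sum>j=1..n. w (Y j \<omega>))) * \<bar>f (Y i \<omega>)\<bar>"
      by (simp only: abs_mult abs_of_nonneg[OF c])
    also have "\<dots> \<le> (w (Y i \<omega>) / (\<Sum>j=1..n. w (Y j \<omega>))) * 1" using c assms(1) by (intro mult_left_mono) auto
    finally show "\<bar>(w (Y i \<omega>) / (\<Sum>j=1..n. w (Y j \<omega>))) * f (Y i \<omega>)\<bar> \<le> w (Y i \<omega>) / (\<Sum>j=1..n. w (Y j \<omega>))" by simp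
  qed
  also have "\<dots> \<le> 1" by (rule coef_sum_le1[where w=w, OF assms(2)])
  finally show ?thesis .
qed

lemma alg:
  fixes A s c N :: real
  assumes "s > 0" "N > 0"
  shows "A/s - c = (A - c * s)/N - ((A-c * s)/N)*(s/N - 1) + (A/s - c)*(s/N - 1)^2"
proof -
  define D where "D = A/s - c"
  have A: "A - c * s = D * s" unfolding D_def using assms by (simp add: field_simps)
  have "(A - c * s)/N - ((A-c * s)/N)*(s/N - 1) + (A/s - c)*(s/N - 1)^2 = D*(s/N - (s/N)*(s/N-1) + (s/N-1)^2)"
    unfolding A D_def[symmetric] using assms by (simp add: field_simps power2_eq_square)
  also have "\<dots> = D" by (simp add: power2_eq_square algebra_simps)
  finally show ?thesis unfolding D_def by simp
qed
lemma abs3: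
  fixes W x y z :: real
  assumes "W > 0"
  shows "\<bar>2 * W * x - 2 * W\<^sup>2 * y + W\<^sup>2 * z\<bar> \<le> 2 * W * \<bar>x\<bar> + 2 * W\<^sup>2 * \<bar>y\<bar> + W\<^sup>2 * \<bar>z\<bar>"
proof -
  have a: "\<bar>2 * W * x\<bar> = 2 * W * \<bar>x\<bar>" using assms by (simp add: abs_mult)
  have b: "\<bar>2 * W\<^sup>2 * y\<bar> = 2 * W\<^sup>2 * \<bar>y\<bar>" using assms by (simp add: abs_mult)
  have c: "\<bar>W\<^sup>2 * z\<bar> = W\<^sup>2 * \<bar>z\<bar>" using assms by (simp add: abs_mult)
  have "\<bar>2 * W * x - 2 * W\<^sup>2 * y + W\<^sup>2 * z\<bar> \<le> \<bar>2 * W * x\<bar> + \<bar>2 * W\<^sup>2 * y\<bar> + \<bar>W\<^sup>2 * z\<bar>"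
    by linarith
  then show ?thesis using a b c by simp
qed



theorem lemma1:
  fixes \<nu> :: "'a::polish_space measure"
    and p pY :: "'a \<Rightarrow> real"
    and P :: "'b measure"
    and Y :: "nat \<Rightarrow> 'b \<Rightarrow> 'a"
    and y0 :: 'a
    and n :: nat
  defines "w \<equiv> (\<lambda>x. p x / pY x)"
    and "wsup \<equiv> (SUP x. \<bar>p x / pY x\<bar>)"
    and "\<pi> \<equiv> density \<nu> (\<lambda>x. ennreal (p x))"
    and "\<pi>Y \<equiv> density \<nu> (\<lambda>x. ennreal (pY x))"
  assumes "sets \<nu> = sets borel"
    and "sigma_finite_measure \<nu>"
    and "p \<in> borel_measurable borel" and "pY \<in> borel_measurable borel"
    and "\<And>x. p x \<ge> 0" and "\<And>x. pY x \<ge> 0"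
    and "prob_space \<pi>" and "prob_space \<pi>Y"
    and "\<And>x. pY x = 0 \<Longrightarrow> p x = 0"
    and "bdd_above (range (\<lambda>x. \<bar>w x\<bar>))"
    and "prob_space P"
    and "\<And>i. Y i \<in> measurable P borel"
    and "\<And>\<omega>. \<omega> \<in> space P \<Longrightarrow> Y 0 \<omega> = y0"
    and "n \<ge> 1"
    and "AE \<omega> in P. (\<Sum>j=1..n. w (Y j \<omega>)) > 0"
  shows "tv_dist (eta P w Y n) \<pi>
     \<le> wsup * (SUP f \<in> unit_fns \<pi>Y. \<integral>\<omega>. emp_dev \<pi>Y Y n \<omega> f \<partial>P)
       + 2 * wsup\<^sup>2 * (SUP f \<in> unit_fns \<pi>Y. \<integral>\<omega>. (emp_dev \<pi>Y Y n \<omega> f)\<^sup>2 \<partial>P)"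
proof -
  interpret P: prob_space P by fact
  interpret pi: prob_space \<pi> by fact
  interpret piY: prob_space \<pi>Y by fact
  define S1 where "S1 = (SUP f \<in> unit_fns \<pi>Y. \<integral>\<omega>. emp_dev \<pi>Y Y n \<omega> f \<partial>P)"
  define S2 where "S2 = (SUP f \<in> unit_fns \<pi>Y. \<integral>\<omega>. (emp_dev \<pi>Y Y n \<omega> f)\<^sup>2 \<partial>P)"
  have snu: "space \<nu> = UNIV" using assms(5) sets_eq_imp_space_eq by fastforce
  have sets_pi[simp]: "sets \<pi> = sets borel" "sets \<pi>Y = sets borel" unfolding \<pi>_def \<pi>Y_def using assms(5) by auto
  have space_pi[simp]: "space \<pi> = UNIV" "space \<pi>Y = UNIV" unfolding \<pi>_def \<pi>Y_def using snu by auto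
  have [measurable]: "p \<in> borel_measurable borel" "pY \<in> borel_measurable borel" using assms by auto
  have wm[measurable]: "w \<in> borel_measurable borel" unfolding w_def by measurable
  have Ym[measurable]: "\<And>i. Y i \<in> borel_measurable P" using assms by auto
  have wnn: "\<And>x. w x \<ge> 0" unfolding w_def using assms by (simp add: divide_nonneg_nonneg)
  have wle: "\<And>x. w x \<le> wsup"
  proof -
    fix x
    have "\<bar>w x\<bar> \<le> wsup" unfolding wsup_def using assms(14) unfolding w_def by (rule cSUP_upper[OF UNIV_I])
    then show "w x \<le> wsup" by simp
  qed
  have wpY: "\<And>x. pY x * w x = p x" unfolding w_def using assms(13) by (case_tac "pY x = 0") auto
  have Wpos: "wsup > 0"
  proof (rule ccontr)
    assume "\<not> wsup > 0"
    then have "\<And>x. w x = 0" using wle wnn by (meson antisym not_le order_trans)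
    then have "AE \<omega> in P. False" using assms(19) by simp
    then show False by simp
  qed
  have meas_nu: "\<And>g. g \<in> borel_measurable borel \<Longrightarrow> g \<in> borel_measurable \<nu>"
    using assms(5) measurable_cong_sets by blast
  have intY: "\<And>g. g \<in> borel_measurable borel \<Longrightarrow> integral\<^sup>L \<pi>Y g = (\<integral>x. pY x * g x \<partial>\<nu>)"
    unfolding \<pi>Y_def using assms by (subst integral_density) (auto intro!: meas_nu AE_I2)
  have intpi: "\<And>g. g \<in> borel_measurable borel \<Longrightarrow> integral\<^sup>L \<pi> g = (\<integral>x. p x * g x \<partial>\<nu>)"
    unfolding \<pi>_def using assms by (subst integral_density) (auto intro!: meas_nu AE_I2)
  have key1: "\<And>g. g \<in> borel_measurable borel \<Longrightarrow> (\<integral>x. w x * g x \<partial>\<pi>Y) = integral\<^sup>L \<pi> g"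
  proof -
    fix g :: "'a \<Rightarrow> real" assume [measurable]: "g \<in> borel_measurable borel"
    have "(\<integral>x. w x * g x \<partial>\<pi>Y) = (\<integral>x. pY x * (w x * g x) \<partial>\<nu>)" by (rule intY) measurable
    also have "\<dots> = (\<integral>x. p x * g x \<partial>\<nu>)" by (simp add: mult.assoc[symmetric] wpY)
    also have "\<dots> = integral\<^sup>L \<pi> g" by (rule intpi[symmetric]) measurable
    finally show "(\<integral>x. w x * g x \<partial>\<pi>Y) = integral\<^sup>L \<pi> g" .
  qed
  have unitY: "\<And>f. f \<in> unit_fns \<pi>Y \<longleftrightarrow> f \<in> borel_measurable borel \<and> (\<forall>x. \<bar>f x\<bar> \<le> 1)"
    unfolding unit_fns_def using measurable_cong_sets[OF sets_pi(2) refl] by auto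
  have emp_m: "\<And>f. f \<in> unit_fns \<pi>Y \<Longrightarrow> (\<lambda>\<omega>. emp_dev \<pi>Y Y n \<omega> f) \<in> borel_measurable P"
    unfolding unitY emp_dev_def by auto
  have emp_b: "\<And>f \<omega>. f \<in> unit_fns \<pi>Y \<Longrightarrow> \<bar>emp_dev \<pi>Y Y n \<omega> f\<bar> \<le> 2"
  proof -
    fix f \<omega> assume f: "f \<in> unit_fns \<pi>Y"
    have "\<bar>(1 / real n) * (\<Sum>i=1..n. f (Y i \<omega>))\<bar> \<le> 1" using f unfolding unitY by (intro avg_bound assms(18)) auto
    moreover have "\<bar>integral\<^sup>L \<pi>Y f\<bar> \<le> 1" using f unfolding unitY by (intro int_abs_le[where B=1] assms) (auto simp: measurable_cong_sets[OF sets_pi(2) refl])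
    ultimately show "\<bar>emp_dev \<pi>Y Y n \<omega> f\<bar> \<le> 2" unfolding emp_dev_def by linarith
  qed
  have S1u: "\<And>f. f \<in> unit_fns \<pi>Y \<Longrightarrow> (\<integral>\<omega>. emp_dev \<pi>Y Y n \<omega> f \<partial>P) \<le> S1"
    unfolding S1_def
  proof (rule cSUP_upper)
    show "bdd_above ((\<lambda>f. \<integral>\<omega>. emp_dev \<pi>Y Y n \<omega> f \<partial>P) ` unit_fns \<pi>Y)"
    proof (rule bdd_aboveI2)
      fix f assume "f \<in> unit_fns \<pi>Y"
      then have "\<bar>\<integral>\<omega>. emp_dev \<pi>Y Y n \<omega> f \<partial>P\<bar> \<le> 2" using emp_m emp_b by (intro int_abs_le assms) auto
      then show "(\<integral>\<omega>. emp_dev \<pi>Y Y n \<omega> f \<partial>P) \<le> 2" by linarith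
    qed
  qed
  have S2u: "\<And>f. f \<in> unit_fns \<pi>Y \<Longrightarrow> (\<integral>\<omega>. (emp_dev \<pi>Y Y n \<omega> f)\<^sup>2 \<partial>P) \<le> S2"
    unfolding S2_def
  proof (rule cSUP_upper)
    show "bdd_above ((\<lambda>f. \<integral>\<omega>. (emp_dev \<pi>Y Y n \<omega> f)\<^sup>2 \<partial>P) ` unit_fns \<pi>Y)"
    proof (rule bdd_aboveI2)
      fix f assume f: "f \<in> unit_fns \<pi>Y"
      have "\<And>\<omega>. \<bar>(emp_dev \<pi>Y Y n \<omega> f)\<^sup>2\<bar> \<le> 4"
      proof -
        fix \<omega> have "\<bar>emp_dev \<pi>Y Y n \<omega> f\<bar> \<le> 2" using emp_b f by blast
        then have "\<bar>emp_dev \<pi>Y Y n \<omega> f\<bar>\<^sup>2 \<le> 2\<^sup>2" by (intro power_mono) auto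
        then show "\<bar>(emp_dev \<pi>Y Y n \<omega> f)\<^sup>2\<bar> \<le> 4" by simp
      qed
      then have "\<bar>\<integral>\<omega>. (emp_dev \<pi>Y Y n \<omega> f)\<^sup>2 \<partial>P\<bar> \<le> 4" using emp_m[OF f] by (intro int_abs_le assms) auto
      then show "(\<integral>\<omega>. (emp_dev \<pi>Y Y n \<omega> f)\<^sup>2 \<partial>P) \<le> 4" by linarith
    qed
  qed
  have main: "\<And>f. f \<in> unit_fns (eta P w Y n) \<Longrightarrow>
     \<bar>integral\<^sup>L (eta P w Y n) f - integral\<^sup>L \<pi> f\<bar> \<le> 2 * wsup * S1 + 4 * wsup\<^sup>2 * S2"
  proof -
    fix f assume fu: "f \<in> unit_fns (eta P w Y n)"
    have seta: "sets (eta P w Y n) = sets borel" "space (eta P w Y n) = UNIV"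
      unfolding eta_bind[OF assms(15) Ym wm wnn] by (auto simp: P.not_empty)
    have fm[measurable]: "f \<in> borel_measurable borel" and fb: "\<And>x. \<bar>f x\<bar> \<le> 1"
      using fu unfolding unit_fns_def seta using measurable_cong_sets[OF seta(1) refl] by auto
    define W where "W = wsup"
    have W0: "W > 0" using Wpos W_def by simp
    define c where "c = integral\<^sup>L \<pi> f"
    have cb: "\<bar>c\<bar> \<le> 1" unfolding c_def using fb by (intro int_abs_le assms) (auto simp: measurable_cong_sets[OF sets_pi(1) refl])
    have intpi_f: "integrable \<pi> f" using fb by (intro intg_bdd[where B=1] assms) (auto simp: measurable_cong_sets[OF sets_pi(1) refl])
    define g where "g x = w x * ((f x - c) / (2 * W))" for x
    define h where "h x = w x * (1 / W)" for x
    have gm[measurable]: "g \<in> borel_measurable borel" unfolding g_def by measurable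
    have pr1: "measure \<pi> UNIV = 1" using pi.prob_space by simp
    have hm[measurable]: "h \<in> borel_measurable borel" unfolding h_def by measurable
    have gb: "\<bar>g x\<bar> \<le> 1" for x
    proof -
      have "\<bar>f x - c\<bar> \<le> 2" using fb[of x] cb by linarith
      then have "\<bar>(f x - c) / (2 * W)\<bar> \<le> 1 / W" using W0 by (simp add: abs_divide field_simps)
      moreover have "\<bar>w x\<bar> \<le> W" using wle wnn W_def by simp
      ultimately have "\<bar>w x\<bar> * \<bar>(f x - c) / (2 * W)\<bar> \<le> W * (1 / W)"
        by (intro mult_mono) auto
      then show ?thesis using W0 by (simp add: g_def abs_mult)
    qed
    have hb: "\<bar>h x\<bar> \<le> 1" for x
      using wle[of x] wnn[of x] W0 unfolding h_def W_def by (simp add: field_simps)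
    have gu: "g \<in> unit_fns \<pi>Y" "(\<lambda>x. - g x) \<in> unit_fns \<pi>Y" "h \<in> unit_fns \<pi>Y"
      unfolding unitY using gb hb by auto
    have intg: "integral\<^sup>L \<pi>Y g = 0"
    proof -
      have "integral\<^sup>L \<pi>Y g = (\<integral>x. (f x - c) / (2 * W) \<partial>\<pi>)" unfolding g_def by (rule key1) measurable
      also have "\<dots> = (integral\<^sup>L \<pi> f - c) / (2 * W)"
        using intpi_f by (simp add: pr1)
      finally show ?thesis by (simp add: c_def)
    qed
    have inth: "integral\<^sup>L \<pi>Y h = 1 / W"
    proof -
      have "integral\<^sup>L \<pi>Y h = (\<integral>x. 1 / W \<partial>\<pi>)" unfolding h_def by (rule key1) measurable
      then show ?thesis by (simp add: pr1)
    qed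
    define th where "th \<omega> = (\<Sum>i=1..n. (w (Y i \<omega>) / (\<Sum>j=1..n. w (Y j \<omega>))) * f (Y i \<omega>))" for \<omega>
    define G where "G \<omega> = emp_dev \<pi>Y Y n \<omega> g" for \<omega>
    define H where "H \<omega> = emp_dev \<pi>Y Y n \<omega> h" for \<omega>
    define D where "D \<omega> = th \<omega> - c" for \<omega>
    have thM[measurable]: "th \<in> borel_measurable P" unfolding th_def by measurable
    have Gm[measurable]: "G \<in> borel_measurable P" unfolding G_def using emp_m gu by blast
    have Hm[measurable]: "H \<in> borel_measurable P" unfolding H_def using emp_m gu by blast
    have Dm[measurable]: "D \<in> borel_measurable P" unfolding D_def by measurable
    have Gb: "\<bar>G \<omega>\<bar> \<le> 2" for \<omega> unfolding G_def using emp_b gu by blast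
    have Hb: "\<bar>H \<omega>\<bar> \<le> 2" for \<omega> unfolding H_def using emp_b gu by blast
    have Db: "\<bar>D \<omega>\<bar> \<le> 2" for \<omega>
      using theta_bound[where w=w and f=f and Y=Y and n=n and \<omega>=\<omega>] fb wnn cb unfolding D_def th_def by fastforce
    have ident: "AE \<omega> in P. D \<omega> = 2 * W * G \<omega> - (2 * W * G \<omega>) * (W * H \<omega>) + D \<omega> * (W * H \<omega>)\<^sup>2"
      using assms(19)
    proof (rule AE_mp, intro AE_I2 impI)
      fix \<omega> assume spos: "(\<Sum>j=1..n. w (Y j \<omega>)) > 0"
      define s where "s = (\<Sum>j=1..n. w (Y j \<omega>))"
      define A where "A = (\<Sum>i=1..n. w (Y i \<omega>) * f (Y i \<omega>))"
      have nn: "real n > 0" using assms(18) by simp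
      have th: "th \<omega> = A / s" unfolding th_def A_def s_def by (simp add: sum_divide_distrib)
      have "(\<Sum>i=1..n. g (Y i \<omega>)) = (A - c * s) / (2 * W)"
        unfolding g_def A_def s_def
        by (simp add: sum_divide_distrib[symmetric] sum_subtractf sum_distrib_left sum_distrib_right algebra_simps)
      then have G: "2 * W * G \<omega> = (A - c * s) / real n"
        unfolding G_def emp_dev_def intg using W0 by simp
      have "(\<Sum>i=1..n. h (Y i \<omega>)) = s / W"
        unfolding h_def s_def by (simp add: sum_divide_distrib[symmetric])
      then have H: "W * H \<omega> = s / real n - 1"
        unfolding H_def emp_dev_def inth using W0 by (simp add: algebra_simps)
      show "D \<omega> = 2 * W * G \<omega> - (2 * W * G \<omega>) * (W * H \<omega>) + D \<omega> * (W * H \<omega>)\<^sup>2"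
        unfolding G H D_def th using alg[OF spos[folded s_def] nn] by simp
    qed
    have int_eta: "integral\<^sup>L (eta P w Y n) f = integral\<^sup>L P th"
      unfolding th_def by (rule eta_integral[OF assms(15) Ym wm wnn fm fb])
    have thb: "\<bar>th \<omega>\<bar> \<le> 1" for \<omega>
      unfolding th_def by (rule theta_bound[where w=w and f=f, OF fb wnn])
    have th_int: "integrable P th" by (rule intg_bdd'[OF assms(15) thM thb])
    have eqD: "integral\<^sup>L (eta P w Y n) f - integral\<^sup>L \<pi> f = integral\<^sup>L P D"
      unfolding int_eta D_def c_def
      by (subst Bochner_Integration.integral_diff) (auto simp: th_int P.prob_space)
    have Gi: "integrable P G" by (rule intg_bdd'[OF assms(15) Gm Gb])
    have GHb: "\<bar>G \<omega> * H \<omega>\<bar> \<le> 4" for \<omega>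
      using mult_mono[OF Gb[of \<omega>] Hb[of \<omega>]] by (simp add: abs_mult)
    have GHi: "integrable P (\<lambda>\<omega>. G \<omega> * H \<omega>)" by (rule intg_bdd'[OF assms(15) _ GHb]) measurable
    have Hsb: "\<bar>(H \<omega>)\<^sup>2\<bar> \<le> 4" for \<omega>
      using mult_mono[OF Hb[of \<omega>] Hb[of \<omega>]] by (simp add: abs_mult power2_eq_square)
    have Gsb: "\<bar>(G \<omega>)\<^sup>2\<bar> \<le> 4" for \<omega>
      using mult_mono[OF Gb[of \<omega>] Gb[of \<omega>]] by (simp add: abs_mult power2_eq_square)
    have DHb: "\<bar>D \<omega> * (H \<omega>)\<^sup>2\<bar> \<le> 8" for \<omega>
      using mult_mono[OF Db[of \<omega>] Hsb[of \<omega>]] by (simp add: abs_mult)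
    have DHi: "integrable P (\<lambda>\<omega>. D \<omega> * (H \<omega>)\<^sup>2)" by (rule intg_bdd'[OF assms(15) _ DHb]) measurable
    have Hsi: "integrable P (\<lambda>\<omega>. (H \<omega>)\<^sup>2)" by (rule intg_bdd'[OF assms(15) _ Hsb]) measurable
    have Gsi: "integrable P (\<lambda>\<omega>. (G \<omega>)\<^sup>2)" by (rule intg_bdd'[OF assms(15) _ Gsb]) measurable
    have "integral\<^sup>L P D = (\<integral>\<omega>. 2 * W * G \<omega> - (2 * W * G \<omega>) * (W * H \<omega>) + D \<omega> * (W * H \<omega>)\<^sup>2 \<partial>P)"
      by (rule integral_cong_AE) (use ident in auto)
    also have "\<dots> = (\<integral>\<omega>. 2 * W * G \<omega> - (2 * W\<^sup>2) * (G \<omega> * H \<omega>) + W\<^sup>2 * (D \<omega> * (H \<omega>)\<^sup>2) \<partial>P)"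
      by (simp add: power2_eq_square algebra_simps)
    also have "\<dots> = 2 * W * integral\<^sup>L P G - (2 * W\<^sup>2) * (\<integral>\<omega>. G \<omega> * H \<omega> \<partial>P) + W\<^sup>2 * (\<integral>\<omega>. D \<omega> * (H \<omega>)\<^sup>2 \<partial>P)"
      using Gi GHi DHi by simp
    finally have decomp: "integral\<^sup>L P D = 2 * W * integral\<^sup>L P G - (2 * W\<^sup>2) * (\<integral>\<omega>. G \<omega> * H \<omega> \<partial>P) + W\<^sup>2 * (\<integral>\<omega>. D \<omega> * (H \<omega>)\<^sup>2 \<partial>P)" .
    have G1: "integral\<^sup>L P G \<le> S1" unfolding G_def by (rule S1u[OF gu(1)])
    have G2: "- integral\<^sup>L P G \<le> S1"
    proof -
      have "\<And>\<omega>. emp_dev \<pi>Y Y n \<omega> (\<lambda>x. - g x) = - G \<omega>"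
        unfolding G_def emp_dev_def by (simp add: sum_negf)
      then show ?thesis using S1u[OF gu(2)] by simp
    qed
    have HS: "(\<integral>\<omega>. (H \<omega>)\<^sup>2 \<partial>P) \<le> S2" unfolding H_def by (rule S2u[OF gu(3)])
    have GS: "(\<integral>\<omega>. (G \<omega>)\<^sup>2 \<partial>P) \<le> S2" unfolding G_def by (rule S2u[OF gu(1)])
    have T1: "\<bar>integral\<^sup>L P G\<bar> \<le> S1" using G1 G2 by linarith
    have T2: "\<bar>\<integral>\<omega>. G \<omega> * H \<omega> \<partial>P\<bar> \<le> S2"
    proof -
      have "\<bar>\<integral>\<omega>. G \<omega> * H \<omega> \<partial>P\<bar> \<le> (\<integral>\<omega>. \<bar>G \<omega> * H \<omega>\<bar> \<partial>P)"
        using integral_norm_bound[of P "\<lambda>\<omega>. G \<omega> * H \<omega>"] by simp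
      also have "\<dots> \<le> (\<integral>\<omega>. ((G \<omega>)\<^sup>2 + (H \<omega>)\<^sup>2) / 2 \<partial>P)"
      proof (rule integral_mono)
        show "integrable P (\<lambda>\<omega>. \<bar>G \<omega> * H \<omega>\<bar>)" using GHi by simp
        show "integrable P (\<lambda>\<omega>. ((G \<omega>)\<^sup>2 + (H \<omega>)\<^sup>2) / 2)" using Gsi Hsi by simp
        fix \<omega>
        have "0 \<le> (\<bar>G \<omega>\<bar> - \<bar>H \<omega>\<bar>)\<^sup>2" by simp
        then show "\<bar>G \<omega> * H \<omega>\<bar> \<le> ((G \<omega>)\<^sup>2 + (H \<omega>)\<^sup>2) / 2"
          by (simp add: abs_mult power2_eq_square algebra_simps)
      qed
      also have "\<dots> = ((\<integral>\<omega>. (G \<omega>)\<^sup>2 \<partial>P) + (\<integral>\<omega>. (H \<omega>)\<^sup>2 \<partial>P)) / 2"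
        using Gsi Hsi by simp
      also have "\<dots> \<le> S2" using GS HS by simp
      finally show ?thesis .
    qed
    have T3: "\<bar>\<integral>\<omega>. D \<omega> * (H \<omega>)\<^sup>2 \<partial>P\<bar> \<le> 2 * S2"
    proof -
      have "\<bar>\<integral>\<omega>. D \<omega> * (H \<omega>)\<^sup>2 \<partial>P\<bar> \<le> (\<integral>\<omega>. \<bar>D \<omega> * (H \<omega>)\<^sup>2\<bar> \<partial>P)"
        using integral_norm_bound[of P "\<lambda>\<omega>. D \<omega> * (H \<omega>)\<^sup>2"] by simp
      also have "\<dots> \<le> (\<integral>\<omega>. 2 * (H \<omega>)\<^sup>2 \<partial>P)"
      proof (rule integral_mono)
        show "integrable P (\<lambda>\<omega>. \<bar>D \<omega> * (H \<omega>)\<^sup>2\<bar>)" using DHi by simp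
        show "integrable P (\<lambda>\<omega>. 2 * (H \<omega>)\<^sup>2)" using Hsi by simp
        fix \<omega>
        show "\<bar>D \<omega> * (H \<omega>)\<^sup>2\<bar> \<le> 2 * (H \<omega>)\<^sup>2"
          using mult_right_mono[OF Db[of \<omega>], of "(H \<omega>)\<^sup>2"] by (simp add: abs_mult)
      qed
      also have "\<dots> = 2 * (\<integral>\<omega>. (H \<omega>)\<^sup>2 \<partial>P)" by simp
      also have "\<dots> \<le> 2 * S2" using HS by simp
      finally show ?thesis .
    qed
    have "\<bar>integral\<^sup>L P D\<bar> \<le> 2 * W * \<bar>integral\<^sup>L P G\<bar> + (2 * W\<^sup>2) * \<bar>\<integral>\<omega>. G \<omega> * H \<omega> \<partial>P\<bar> + W\<^sup>2 * \<bar>\<integral>\<omega>. D \<omega> * (H \<omega>)\<^sup>2 \<partial>P\<bar>"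
      unfolding decomp using W0 by (rule abs3)
    also have "\<dots> \<le> 2 * W * S1 + (2 * W\<^sup>2) * S2 + W\<^sup>2 * (2 * S2)"
      using W0 T1 T2 T3 by (intro add_mono mult_left_mono) auto
    finally show "\<bar>integral\<^sup>L (eta P w Y n) f - integral\<^sup>L \<pi> f\<bar> \<le> 2 * wsup * S1 + 4 * wsup\<^sup>2 * S2"
      unfolding eqD W_def by (simp add: algebra_simps)
  qed
  have "tv_dist (eta P w Y n) \<pi> \<le> (1/2) * (2 * wsup * S1 + 4 * wsup\<^sup>2 * S2)"
    unfolding tv_dist_def
  proof (intro mult_left_mono cSUP_least main)
    have "(\<lambda>x. 0::real) \<in> unit_fns (eta P w Y n)" unfolding unit_fns_def by auto
    then show "unit_fns (eta P w Y n) \<noteq> {}" by blast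
  qed auto
  then show ?thesis unfolding S1_def S2_def by (simp add: algebra_simps)
qed

end
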